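(* Let $\mathcal{A}$ be a commutative unital $C^*$-algebra and let $F\in B^a(H_{\mathcal{A}})$ be self-adjoint. Then $\sigma_p^{\mathcal{A}}(F)$ is a self-adjoint subset of $\mathcal{A}$, i.e. $\alpha\in\sigma_p^{\mathcal{A}}(F)$ if and only if $\alpha^*\in\sigma_p^{\mathcal{A}}(F)$.
   Context: $H_{\mathcal{A}}=l_2(\mathcal{A})$ is the standard Hilbert $C^*$-module of sequences $(x_1,x_2,\dots)$ in $\mathcal{A}$ with $\sum_k x_k^*x_k$ norm-convergent, inner product $\langle x,y\rangle=\sum_k x_k^*y_k$. $B^a(H_{\mathcal{A}})$ denotes the bounded adjointable $\mathcal{A}$-linear operators on $H_{\mathcal{A}}$. For $\alpha\in\mathcal{A}$, $\alpha I$ is the operator $(x_k)\mapsto(\alpha x_k)$. $\sigma_p^{\mathcal{A}}(F)=\{\alpha\in\mathcal{A}\mid\ker(F-\alpha I)\ne\{0\}\}$. *)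

theory Defs
  imports Complex_Main
begin

text \<open>The complex
scalar multiplication is scaleC; the real scalar multiplication inherited from
real_normed_algebra_1 is required to agree with it.\<close>

class comm_cstar_algebra = comm_ring_1 + real_normed_algebra_1 + banach +
  fixes scaleC :: "complex \<Rightarrow> 'a \<Rightarrow> 'a"
    and cstar :: "'a \<Rightarrow> 'a"
  assumes scaleC_add_right: "scaleC c (a + b) = scaleC c a + scaleC c b"
    and scaleC_add_left: "scaleC (c + d) a = scaleC c a + scaleC d a"
    and scaleC_scaleC: "scaleC c (scaleC d a) = scaleC (c * d) a"
    and scaleC_one: "scaleC 1 a = a"
    and scaleR_scaleC: "scaleR r a = scaleC (complex_of_real r) a"
    and mult_scaleC_left: "scaleC c a * b = scaleC c (a * b)"
    and norm_scaleC: "norm (scaleC c a) = cmod c * norm a"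
    and cstar_cstar: "cstar (cstar a) = a"
    and cstar_add: "cstar (a + b) = cstar a + cstar b"
    and cstar_scaleC: "cstar (scaleC c a) = scaleC (cnj c) (cstar a)"
    and cstar_mult: "cstar (a * b) = cstar b * cstar a"
    and cstar_identity: "norm (cstar a * a) = norm a * norm a"

definition hilbA :: "(nat \<Rightarrow> 'a::comm_cstar_algebra) set" where
  "hilbA = {x. summable (\<lambda>k. cstar (x k) * x k)}"

definition hinner :: "(nat \<Rightarrow> 'a::comm_cstar_algebra) \<Rightarrow> (nat \<Rightarrow> 'a) \<Rightarrow> 'a" where
  "hinner x y = (\<Sum>k. cstar (x k) * y k)"

definition hnorm :: "(nat \<Rightarrow> 'a::comm_cstar_algebra) \<Rightarrow> real" where
  "hnorm x = sqrt (norm (hinner x x))"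

definition Ba :: "((nat \<Rightarrow> 'a::comm_cstar_algebra) \<Rightarrow> (nat \<Rightarrow> 'a)) set" where
  "Ba = {F. (\<forall>x\<in>hilbA. F x \<in> hilbA)
     \<and> (\<forall>x\<in>hilbA. \<forall>y\<in>hilbA. F (\<lambda>k. x k + y k) = (\<lambda>k. F x k + F y k))
     \<and> (\<forall>x\<in>hilbA. \<forall>a. F (\<lambda>k. a * x k) = (\<lambda>k. a * F x k))
     \<and> (\<exists>C. \<forall>x\<in>hilbA. hnorm (F x) \<le> C * hnorm x)
     \<and> (\<exists>G. (\<forall>y\<in>hilbA. G y \<in> hilbA) \<and>
            (\<forall>x\<in>hilbA. \<forall>y\<in>hilbA. hinner (F x) y = hinner x (G y)))}"

definition selfadjoint_op :: "((nat \<Rightarrow> 'a::comm_cstar_algebra) \<Rightarrow> (nat \<Rightarrow> 'a)) \<Rightarrow> bool" where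
  "selfadjoint_op F \<longleftrightarrow> (\<forall>x\<in>hilbA. \<forall>y\<in>hilbA. hinner (F x) y = hinner x (F y))"

definition point_spectrumA :: "((nat \<Rightarrow> 'a::comm_cstar_algebra) \<Rightarrow> (nat \<Rightarrow> 'a)) \<Rightarrow> 'a set" where
  "point_spectrumA F = {\<alpha>. \<exists>x\<in>hilbA. x \<noteq> (\<lambda>_. 0) \<and> (\<lambda>k. F x k - \<alpha> * x k) = (\<lambda>_. 0)}"

end

theory Submission imports Defs "HOL-Computational_Algebra.Formal_Power_Series" begin

lemma cstar_zero[simp]: "cstar (0::'a::comm_cstar_algebra) = 0"
  using cstar_add[of "0::'a" 0] by simp

lemma cstar_minus[simp]: "cstar (- a) = - cstar (a::'a::comm_cstar_algebra)"
  using cstar_add[of a "-a"] by (simp add: eq_neg_iff_add_eq_0 add.commute)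

lemma cstar_diff[simp]: "cstar (a - b) = cstar a - cstar (b::'a::comm_cstar_algebra)"
  using cstar_add[of a "-b"] by simp

lemma cstar_one[simp]: "cstar (1::'a::comm_cstar_algebra) = 1"
proof -
  have "cstar (1::'a) = cstar 1 * cstar (cstar 1)" by (simp add: cstar_cstar)
  also have "\<dots> = cstar (cstar 1 * 1)" by (simp only: cstar_mult)
  also have "\<dots> = 1" by (simp add: cstar_cstar)
  finally show ?thesis .
qed

lemma cstar_scaleR[simp]: "cstar (scaleR r a) = scaleR r (cstar (a::'a::comm_cstar_algebra))"
  by (simp add: scaleR_scaleC cstar_scaleC)

lemma cstar_of_real[simp]: "cstar (of_real r :: 'a::comm_cstar_algebra) = of_real r"
  unfolding of_real_def by simp

lemma norm_cstar_le: "norm (cstar a) \<le> norm (a::'a::comm_cstar_algebra)"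
proof (cases "cstar a = 0")
  case True then show ?thesis by simp
next
  case False
  have "norm (cstar a) * norm (cstar a) = norm (cstar (cstar a) * cstar a)"
    by (simp add: cstar_identity)
  also have "\<dots> = norm (a * cstar a)" by (simp add: cstar_cstar)
  also have "\<dots> \<le> norm a * norm (cstar a)" by (rule norm_mult_ineq)
  finally show ?thesis using False by (simp add: mult_le_cancel_right)
qed

lemma norm_cstar[simp]: "norm (cstar a) = norm (a::'a::comm_cstar_algebra)"
  using norm_cstar_le[of a] norm_cstar_le[of "cstar a"] by (simp add: cstar_cstar)

lemma bl_cstar: "bounded_linear (cstar :: 'a::comm_cstar_algebra \<Rightarrow> 'a)"
  by (rule bounded_linear_intro[where K=1]) (auto simp: cstar_add)

lemma cstar_power[simp]: "cstar (a ^ n) = cstar (a::'a::comm_cstar_algebra) ^ n"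
  by (induction n) (auto simp: cstar_mult mult.commute)

definition ii :: "'a::comm_cstar_algebra" where "ii = scaleC \<i> 1"

lemma scaleC_neg1: "scaleC (-1) a = - (a::'a::comm_cstar_algebra)"
  using scaleR_scaleC[of "-1" a] by simp

lemma ii_sq: "ii * ii = (- 1::'a::comm_cstar_algebra)"
  unfolding ii_def by (simp add: mult_scaleC_left scaleC_scaleC scaleC_one scaleC_neg1)

lemma cstar_ii: "cstar ii = (- ii::'a::comm_cstar_algebra)"
proof -
  have "cstar (ii::'a) = scaleC (-1) (scaleC \<i> 1)"
    unfolding ii_def by (simp add: cstar_scaleC scaleC_scaleC)
  then show ?thesis by (simp add: scaleC_neg1 ii_def)
qed

lemma norm_ii: "norm (ii::'a::comm_cstar_algebra) = 1"
  unfolding ii_def by (simp add: norm_scaleC)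


lemma two_sq_id:
  fixes x y :: "'a::comm_cstar_algebra"
  assumes "cstar x = x" "cstar y = y"
  shows "cstar (x + ii*y) * (x + ii*y) = x*x + y*y"
proof -
  have "cstar (x + ii*y) = x - ii*y" using assms by (simp add: cstar_add cstar_mult cstar_ii mult.commute)
  moreover have "(x - ii*y) * (x + ii*y) = x*x - (ii*ii)*(y*y)" by (simp add: algebra_simps)
  ultimately show ?thesis by (simp add: ii_sq)
qed

lemma two_sq:
  fixes x y :: "'a::comm_cstar_algebra"
  assumes "cstar x = x" "cstar y = y"
  shows "norm x * norm x \<le> norm (x*x + y*y)"
proof -
  let ?u = "x + ii*y"
  have "cstar ?u = x - ii*y" using assms by (simp add: cstar_add cstar_mult cstar_ii mult.commute)
  then have "x + x = ?u + cstar ?u" by simp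
  then have "norm (x + x) \<le> norm ?u + norm ?u" by (metis norm_cstar norm_triangle_ineq)
  then have "norm x \<le> norm ?u" by (simp flip: scaleR_2)
  then have "norm x * norm x \<le> norm ?u * norm ?u" by (simp add: mult_mono)
  also have "\<dots> = norm (x*x + y*y)" using two_sq_id[OF assms] cstar_identity[of ?u] by simp
  finally show ?thesis .
qed

lemma decomp:
  fixes u :: "'a::comm_cstar_algebra"
  shows "\<exists>x y. cstar x = x \<and> cstar y = y \<and> u = x + ii*y \<and> norm y \<le> norm u"
proof (intro exI conjI)
  let ?x = "scaleR (1/2) (u + cstar u)"
  let ?y = "scaleR (1/2) (ii * (cstar u - u))"
  show "cstar ?x = ?x" by (simp add: cstar_add cstar_cstar add.commute)
  show "cstar ?y = ?y" by (simp add: cstar_mult cstar_cstar cstar_ii algebra_simps)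
  have "?x + ii * ?y = scaleR (1/2) (u + cstar u) + scaleR (1/2) ((ii*ii) * (cstar u - u))"
    by (simp add: algebra_simps)
  also have "\<dots> = scaleR (1/2) ((u + cstar u) - (cstar u - u))"
    by (simp add: ii_sq scaleR_add_right[symmetric] del: scaleR_add_right)
  also have "\<dots> = scaleR (1/2) (scaleR 2 u)" by (simp add: scaleR_2)
  also have "\<dots> = u" by simp
  finally show "u = ?x + ii * ?y" by simp
  have "norm ?y \<le> (1/2) * (norm (ii::'a) * norm (cstar u - u))"
    by (simp add: norm_mult_ineq)
  also have "\<dots> \<le> (1/2) * (norm u + norm u)" using norm_triangle_ineq4[of "cstar u" u]
    by (simp add: norm_ii)
  finally show "norm ?y \<le> norm u" by simp
qed


lemma half_gchoose_le: "\<bar>(1/2::real) gchoose n\<bar> \<le> 1"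
proof (induction n)
  case 0 then show ?case by simp
next
  case (Suc k)
  have e: "(1/2::real) gchoose Suc k = ((1/2 - of_nat k) / of_nat (Suc k)) * ((1/2) gchoose k)"
    using gbinomial_mult_1[of "1/2::real" k] by (simp add: field_simps del: of_nat_Suc)
  have "\<bar>(1/2 - of_nat k) / of_nat (Suc k)\<bar> \<le> (1::real)" by (simp add: abs_le_iff)
  then show ?case unfolding e abs_mult using Suc
    by (metis abs_ge_zero mult_le_one)
qed

lemma one_gchoose: "(1::real) gchoose k = (if k \<le> 1 then 1 else 0)"
proof -
  have "(1::real) gchoose k = of_nat (1 choose k)" using binomial_gbinomial[of 1 k, where 'a=real] by (simp del: binomial_Suc_n)
  then show ?thesis by (cases k) auto
qed

lemma sqrt_base:
  fixes h :: "'a::comm_cstar_algebra"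
  assumes sa: "cstar h = h" and n: "norm h < 1"
  shows "\<exists>s. cstar s = s \<and> s * s = 1 - h"
proof -
  define b where "b n = (-1)^n * ((1/2::real) gchoose n)" for n
  define a where "a n = scaleR (b n) (h ^ n)" for n
  have bb: "\<bar>b n\<bar> \<le> 1" for n unfolding b_def abs_mult using half_gchoose_le by simp
  have na: "norm (a n) \<le> norm h ^ n" for n
  proof -
    have "norm (a n) = \<bar>b n\<bar> * norm (h ^ n)" unfolding a_def by simp
    also have "\<dots> \<le> 1 * norm h ^ n" by (rule mult_mono[OF bb norm_power_ineq]) auto
    finally show ?thesis by simp
  qed
  have sumn: "summable (\<lambda>n. norm (a n))"
    by (rule summable_comparison_test[OF _ summable_geometric[of "norm h"]])
       (use na n in auto)
  have cp: "(\<lambda>k. \<Sum>i\<le>k. a i * a (k - i)) sums ((\<Sum>k. a k) * (\<Sum>k. a k))"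
    by (rule Cauchy_product_sums[OF sumn sumn])
  have ck: "(\<Sum>i\<le>k. a i * a (k - i)) = scaleR ((-1)^k * (if k \<le> 1 then 1 else 0)) (h ^ k)" for k
  proof -
    have "(\<Sum>i\<le>k. a i * a (k - i)) = (\<Sum>i\<le>k. scaleR ((-1)^k * (((1/2::real) gchoose i) * ((1/2) gchoose (k - i)))) (h ^ k))"
    proof (rule sum.cong[OF refl])
      fix i assume "i \<in> {..k}"
      then have ik: "i \<le> k" by simp
      have "h ^ i * h ^ (k - i) = h ^ k" using ik by (simp flip: power_add)
      moreover have "(-1::real)^i * (-1)^(k-i) = (-1)^k" using ik by (simp flip: power_add)
      ultimately show "a i * a (k - i) = scaleR ((-1)^k * (((1/2::real) gchoose i) * ((1/2) gchoose (k - i)))) (h ^ k)"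
        unfolding a_def b_def by (simp add: algebra_simps)
    qed
    also have "\<dots> = scaleR ((-1)^k * (\<Sum>i\<le>k. ((1/2::real) gchoose i) * ((1/2) gchoose (k - i)))) (h ^ k)"
      by (simp add: scaleR_sum_left sum_distrib_left)
    also have "(\<Sum>i\<le>k. ((1/2::real) gchoose i) * ((1/2) gchoose (k - i))) = 1 gchoose k"
      using gbinomial_Vandermonde[of "1/2::real" "1/2" k] by (simp add: atLeast0AtMost)
    finally show ?thesis by (simp add: one_gchoose)
  qed
  have "(\<lambda>k. scaleR ((-1)^k * (if k \<le> 1 then 1 else 0)) (h ^ k)) sums
        (\<Sum>k\<in>{0,1}. scaleR ((-1)^k * (if k \<le> 1 then 1 else 0)) (h ^ k))"
    by (rule sums_finite) auto
  then have "(\<lambda>k. \<Sum>i\<le>k. a i * a (k - i)) sums (1 - h)" by (simp add: ck)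
  with cp have sq: "(\<Sum>k. a k) * (\<Sum>k. a k) = 1 - h" using sums_unique2 by blast
  have "summable a" using sumn summable_norm_cancel by blast
  then have "(\<lambda>n. cstar (a n)) sums cstar (\<Sum>k. a k)"
    using bounded_linear.sums[OF bl_cstar] summable_sums by blast
  moreover have "cstar (a n) = a n" for n unfolding a_def using sa by simp
  ultimately have "cstar (\<Sum>k. a k) = (\<Sum>k. a k)" using sums_unique by force
  with sq show ?thesis by blast
qed


lemma norm_sa_sq: "cstar (y::'a::comm_cstar_algebra) = y \<Longrightarrow> norm (y * y) = norm y * norm y"
  using cstar_identity[of y] by simp

lemma sqrt_scaled:
  fixes g :: "'a::comm_cstar_algebra"
  assumes sa: "cstar g = g" and n: "norm g < c"
  shows "\<exists>r. cstar r = r \<and> r * r = of_real c - g"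
proof -
  have c: "c > 0" using n norm_ge_zero[of g] by linarith
  let ?h = "scaleR (1/c) g"
  have "norm ?h < 1" using n c by (simp add: field_simps)
  moreover have "cstar ?h = ?h" using sa by simp
  ultimately obtain s where s: "cstar s = s" "s * s = 1 - ?h" using sqrt_base by blast
  let ?r = "scaleR (sqrt c) s"
  have "?r * ?r = scaleR (sqrt c * sqrt c) (s * s)" by simp
  also have "\<dots> = scaleR c (1 - ?h)" using c s by simp
  also have "\<dots> = of_real c - g" using c by (simp add: scaleR_diff_right of_real_def)
  finally show ?thesis using s by (intro exI[of _ ?r]) simp
qed

definition Pos :: "'a::comm_cstar_algebra \<Rightarrow> bool" where
  "Pos h \<longleftrightarrow> cstar h = h \<and> (\<forall>t\<ge>norm h. norm (of_real t - h) \<le> t)"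

lemma pos_sqrt:
  fixes h :: "'a::comm_cstar_algebra"
  assumes "Pos h" "e > 0"
  shows "\<exists>r. cstar r = r \<and> r * r = h + of_real e"
proof -
  let ?g = "of_real (norm h) - h"
  have "cstar ?g = ?g" "norm ?g \<le> norm h" using assms(1) unfolding Pos_def by auto
  then obtain r where "cstar r = r" "r * r = of_real (norm h + e) - ?g"
    using sqrt_scaled[of ?g "norm h + e"] assms(2) by force
  then show ?thesis by (intro exI[of _ r]) (simp add: of_real_add)
qed

lemma one_sq:
  fixes y :: "'a::comm_cstar_algebra"
  assumes sa: "cstar y = y" and n: "norm y * norm y < c"
  shows "norm (of_real c - y * y) \<le> c"
proof -
  have c: "c > 0" using n by (metis le_less_trans mult_nonneg_nonneg norm_ge_zero)
  obtain s where s: "cstar s = s" "s * s = of_real c - y * y"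
    using sqrt_scaled[of "y*y" c] sa n by (auto simp: norm_sa_sq cstar_mult)
  have "norm s * norm s \<le> norm (s * s + y * y)" by (rule two_sq[OF s(1) sa])
  also have "\<dots> = c" using s c by simp
  finally show ?thesis using s norm_sa_sq[OF s(1)] by simp
qed

lemma pos_sq: "Pos (cstar u * (u::'a::comm_cstar_algebra))"
  unfolding Pos_def
proof (intro conjI allI impI)
  show "cstar (cstar u * u) = cstar u * u" by (simp add: cstar_mult cstar_cstar mult.commute)
  fix t assume t: "t \<ge> norm (cstar u * u)"
  obtain x y where xy: "cstar x = x" "cstar y = y" "u = x + ii*y" "norm y \<le> norm u"
    using decomp by blast
  have uu: "cstar u * u = x*x + y*y" using two_sq_id[OF xy(1,2)] xy(3) by simp
  have nu: "norm (cstar u * u) = norm u * norm u" by (simp add: cstar_identity)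
  show "norm (of_real t - cstar u * u) \<le> t"
  proof (rule field_le_epsilon)
    fix e :: real assume e: "e > 0"
    let ?c = "t + e/2"
    have sau: "cstar (cstar u * u) = cstar u * u" by (simp add: cstar_mult cstar_cstar mult.commute)
    obtain r where r: "cstar r = r" "r * r = of_real ?c - cstar u * u"
      using sqrt_scaled[OF sau, of ?c] t e by force
    have "norm y * norm y \<le> norm u * norm u" using xy(4) by (simp add: mult_mono)
    then have ny: "norm y * norm y < ?c" using t e nu by linarith
    have "norm r * norm r \<le> norm (r * r + x * x)" by (rule two_sq[OF r(1) xy(1)])
    also have "r * r + x * x = of_real ?c - y * y" using r(2) uu by (simp add: algebra_simps)
    also have "norm \<dots> \<le> ?c" by (rule one_sq[OF xy(2) ny])
    finally have "norm (of_real ?c - cstar u * u) \<le> ?c" using r norm_sa_sq[OF r(1)] by simp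
    moreover have eq: "of_real t - cstar u * u = (of_real ?c - cstar u * u) - (of_real (e/2) :: 'a)"
      by (simp add: of_real_add)
    have "norm (of_real t - cstar u * u) \<le> norm (of_real ?c - cstar u * u) + norm (of_real (e/2) :: 'a)"
      unfolding eq by (rule norm_triangle_ineq4)
    moreover have "norm (of_real (e/2) :: 'a) = e/2" using e by simp
    ultimately have "norm (of_real t - cstar u * u) \<le> ?c + e/2" by linarith
    then show "norm (of_real t - cstar u * u) \<le> t + e" by simp
  qed
qed


lemma pos_closed:
  fixes h :: "'a::comm_cstar_algebra"
  assumes a: "\<And>e. e > 0 \<Longrightarrow> \<exists>g. Pos g \<and> norm (g - h) < e"
  shows "Pos h"
  unfolding Pos_def
proof (intro conjI allI impI)
  show "cstar h = h"
  proof -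
    have "norm (cstar h - h) \<le> 0"
    proof (rule field_le_epsilon)
      fix e :: real assume e: "e > 0"
      obtain g where g: "Pos g" "norm (g - h) < e/2" using a[of "e/2"] e by auto
      have "cstar h - h = cstar (h - g) + (g - h)" using g(1) unfolding Pos_def by simp
      then have "norm (cstar h - h) \<le> norm (cstar (h - g)) + norm (g - h)"
        using norm_triangle_ineq by metis
      then have "norm (cstar h - h) \<le> norm (h - g) + norm (g - h)"
        using norm_cstar[of "h - g"] by linarith
      then show "norm (cstar h - h) \<le> 0 + e" using g(2) by (simp add: norm_minus_commute)
    qed
    then show ?thesis by simp
  qed
  fix t assume t: "t \<ge> norm h"
  show "norm (of_real t - h) \<le> t"
  proof (rule field_le_epsilon)
    fix e :: real assume e: "e > 0"
    obtain g where g: "Pos g" "norm (g - h) < e/3" using a[of "e/3"] e by auto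
    have "norm g \<le> norm h + norm (g - h)" by (metis norm_triangle_sub add.commute)
    then have "norm g \<le> t + e/3" using t g(2) by linarith
    then have 1: "norm (of_real (t + e/3) - g) \<le> t + e/3" using g(1) unfolding Pos_def by blast
    have eq: "of_real t - h = (of_real (t + e/3) - g) + ((g - h) - (of_real (e/3) :: 'a))"
      by (simp add: of_real_add)
    have "norm (of_real t - h) \<le> norm (of_real (t + e/3) - g) + (norm (g - h) + norm (of_real (e/3) :: 'a))"
      unfolding eq using norm_triangle_ineq[of "of_real (t + e/3) - g" "(g - h) - (of_real (e/3) :: 'a)"]
        norm_triangle_ineq4[of "g - h" "of_real (e/3) :: 'a"] by linarith
    moreover have "norm (of_real (e/3) :: 'a) = e/3" using e by simp
    ultimately show "norm (of_real t - h) \<le> t + e" using 1 g(2) by linarith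
  qed
qed

lemma pos_add:
  fixes h k :: "'a::comm_cstar_algebra"
  assumes "Pos h" "Pos k"
  shows "Pos (h + k)"
proof (rule pos_closed)
  fix e :: real assume e: "e > 0"
  obtain r where r: "cstar r = r" "r * r = h + of_real (e/4)" using pos_sqrt[OF assms(1), of "e/4"] e by (auto simp del: of_real_divide)
  obtain q where q: "cstar q = q" "q * q = k + of_real (e/4)" using pos_sqrt[OF assms(2), of "e/4"] e by (auto simp del: of_real_divide)
  have "cstar (r + ii*q) * (r + ii*q) = h + k + of_real (e/2)"
    using two_sq_id[OF r(1) q(1)] r(2) q(2) by (simp add: algebra_simps flip: of_real_add)
  then have "Pos (h + k + of_real (e/2))" using pos_sq[of "r + ii*q"] by simp
  moreover have "norm ((h + k + of_real (e/2)) - (h + k)) < e" using e by simp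
  ultimately show "\<exists>g. Pos g \<and> norm (g - (h + k)) < e" by blast
qed

lemma pos_zero: "Pos (0::'a::comm_cstar_algebra)"
  unfolding Pos_def by simp

lemma pos_antisym:
  fixes h :: "'a::comm_cstar_algebra"
  assumes "Pos h" "Pos (- h)"
  shows "h = 0"
proof -
  have "norm h \<le> 0"
  proof (rule field_le_epsilon)
    fix e :: real assume e: "e > 0"
    obtain r where r: "cstar r = r" "r * r = h + of_real (e/3)" using pos_sqrt[OF assms(1), of "e/3"] e by (auto simp del: of_real_divide)
    obtain q where q: "cstar q = q" "q * q = - h + of_real (e/3)" using pos_sqrt[OF assms(2), of "e/3"] e by (auto simp del: of_real_divide)
    have "norm r * norm r \<le> norm (r * r + q * q)" by (rule two_sq[OF r(1) q(1)])
    also have "r * r + q * q = of_real (e/3) + of_real (e/3)" using r q by simp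
    also have "\<dots> = of_real (2*e/3)" by (simp flip: of_real_add)
    finally have "norm (h + of_real (e/3)) \<le> 2*e/3" using e r norm_sa_sq[OF r(1)] by simp
    moreover have "norm h \<le> norm (h + of_real (e/3)) + norm (of_real (e/3) :: 'a)"
      using norm_triangle_ineq4[of "h + of_real (e/3)" "of_real (e/3) :: 'a"] by simp
    moreover have "norm (of_real (e/3) :: 'a) = e/3" using e by simp
    ultimately show "norm h \<le> 0 + e" by linarith
  qed
  then show ?thesis by simp
qed


lemma sumsq_zero:
  fixes z :: "nat \<Rightarrow> 'a::comm_cstar_algebra"
  assumes s: "summable (\<lambda>k. cstar (z k) * z k)" and z: "(\<Sum>k. cstar (z k) * z k) = 0"
  shows "z j = 0"
proof -
  define p where "p k = cstar (z k) * z k" for k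
  define q where "q k = (if k = j then 0 else p k)" for k
  have "p sums 0" using s z unfolding p_def by (metis summable_sums)
  then have "(\<lambda>k. p k - (if k = j then p k else 0)) sums (0 - p j)"
    using sums_diff[OF _ sums_single[of j p]] by blast
  moreover have "(\<lambda>k. p k - (if k = j then p k else 0)) = q" unfolding q_def by auto
  ultimately have qs: "q sums (- p j)" by simp
  have ps: "Pos (sum q {..<n})" for n
  proof (induction n)
    case 0 then show ?case by (simp add: pos_zero)
  next
    case (Suc n)
    have "Pos (q n)" unfolding q_def p_def by (simp add: pos_zero pos_sq)
    then show ?case using Suc by (simp add: pos_add)
  qed
  have "Pos (- p j)"
  proof (rule pos_closed)
    fix e :: real assume e: "e > 0"
    from qs have "(\<lambda>n. sum q {..<n}) \<longlonglongrightarrow> - p j" by (simp add: sums_def)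
    then obtain N where "\<forall>n\<ge>N. norm (sum q {..<n} - - p j) < e" using LIMSEQ_iff e by metis
    then show "\<exists>g. Pos g \<and> norm (g - - p j) < e" using ps by blast
  qed
  moreover have "Pos (p j)" unfolding p_def by (rule pos_sq)
  ultimately have "p j = 0" using pos_antisym by blast
  then have "norm (z j) * norm (z j) = 0" unfolding p_def using cstar_identity[of "z j"] by simp
  then show ?thesis by simp
qed

lemma one_dir:
  fixes F :: "(nat \<Rightarrow> 'a::comm_cstar_algebra) \<Rightarrow> (nat \<Rightarrow> 'a)"
  assumes sa: "selfadjoint_op F" and a: "\<alpha> \<in> point_spectrumA F"
  shows "cstar \<alpha> \<in> point_spectrumA F"
proof -
  obtain x where x: "x \<in> hilbA" "x \<noteq> (\<lambda>_. 0)" "(\<lambda>k. F x k - \<alpha> * x k) = (\<lambda>_. 0)"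
    using a unfolding point_spectrumA_def by blast
  have Fx: "F x k = \<alpha> * x k" for k using fun_cong[OF x(3), of k] by simp
  have sx: "summable (\<lambda>k. cstar (x k) * x k)" using x(1) unfolding hilbA_def by simp
  have "hinner (F x) x = hinner x (F x)" using sa x(1) unfolding selfadjoint_op_def by blast
  moreover have "hinner (F x) x = cstar \<alpha> * hinner x x"
    unfolding hinner_def Fx using suminf_mult[OF sx, of "cstar \<alpha>"]
    by (simp add: cstar_mult mult.assoc mult.commute mult.left_commute)
  moreover have "hinner x (F x) = \<alpha> * hinner x x"
    unfolding hinner_def Fx using suminf_mult[OF sx, of "\<alpha>"]
    by (simp add: mult.assoc mult.commute mult.left_commute)
  ultimately have d0: "(\<alpha> - cstar \<alpha>) * hinner x x = 0" by (simp add: algebra_simps)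
  define d where "d = \<alpha> - cstar \<alpha>"
  define z where "z k = d * x k" for k
  have zz: "cstar (z k) * z k = (cstar d * d) * (cstar (x k) * x k)" for k
    unfolding z_def by (simp add: cstar_mult algebra_simps)
  have sz: "summable (\<lambda>k. cstar (z k) * z k)" unfolding zz using summable_mult[OF sx] by blast
  have "(\<Sum>k. cstar (z k) * z k) = (cstar d * d) * hinner x x"
    unfolding zz hinner_def by (rule suminf_mult[OF sx])
  also have "\<dots> = cstar d * (d * hinner x x)" by (simp add: mult.assoc)
  also have "\<dots> = 0" using d0 unfolding d_def by simp
  finally have "z k = 0" for k using sumsq_zero[OF sz] by blast
  then have "\<alpha> * x k = cstar \<alpha> * x k" for k unfolding z_def d_def by (simp add: algebra_simps)
  then have "(\<lambda>k. F x k - cstar \<alpha> * x k) = (\<lambda>_. 0)" using Fx by auto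
  then show ?thesis using x(1,2) unfolding point_spectrumA_def by blast
qed

theorem lemma2p13:
  fixes F :: "(nat \<Rightarrow> 'a::comm_cstar_algebra) \<Rightarrow> (nat \<Rightarrow> 'a)"
  assumes "F \<in> Ba" and "selfadjoint_op F"
  shows "\<alpha> \<in> point_spectrumA F \<longleftrightarrow> cstar \<alpha> \<in> point_spectrumA F"
  using one_dir[OF assms(2), of \<alpha>] one_dir[OF assms(2), of "cstar \<alpha>"] by (auto simp: cstar_cstar)

end
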